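(* Let $U=U_1\times\cdots\times U_m\subset\mathbb{R}^m_+$ be a convex set with each $U_i\subseteq\mathbb{R}$, let $C\subseteq\mathbb{R}^m$ be a set and $\overline{U}=U\cap C$. Let $c\in\mathbb{R}^{n_1}$, $d\in\mathbb{R}^{n_2}$, $a_i\in\mathbb{R}^{n_1}$, $g_i\in\mathbb{R}^{n_2}$ ($i\in[m]$). For a set $S\subseteq\mathbb{R}^m$ define the adaptive robust value $$z(S)=\inf_{x\in\mathbb{R}^{n_1},\ y:S\to\mathbb{R}^{n_2}}\Big\{c^Tx+\sup_{u\in S}d^Ty(u):\ a_i^Tx+g_i^Ty(u)\ge u_i\ \ \forall u\in S,\ \forall i\in[m]\Big\},$$ and let $z_{\rm aro}=z(U)$, $z_{\rm acp}=z(\overline{U})$. Let $\rho_{\rm aro}=\rho(U^\downarrow,\overline{U}^\downarrow)$ and $\gamma_{\rm aro}=\gamma(U^\downarrow,\overline{U}^\downarrow)$. If $0<z_{\rm acp}\le z_{\rm aro}<\infty$, then $$\rho_{\rm aro}\le\frac{z_{\rm acp}}{z_{\rm aro}}\le\gamma_{\rm aro}.$$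
   Context: $[m]=\{1,\dots,m\}$. For $S\subseteq\mathbb{R}^m_+$, $S^\downarrow=\{t\in\mathbb{R}^m_+:\exists s\in S,\ t\le s\text{ componentwise}\}$. For $r\ge0$, $rS=\{rx:x\in S\}$. For sets $S_1,S_2$: $\rho(S_1,S_2)=\max\{\rho\ge 0:\rho S_1\subseteq S_2\}$ and $\gamma(S_1,S_2)=\min\{\gamma\ge0: S_2\subseteq \gamma S_1\}$. The second-stage decision $y$ ranges over arbitrary functions of the uncertainty. *)

theory Defs
  imports "HOL-Analysis.Analysis"
begin

definition down_closure :: "(real^'m) set \<Rightarrow> (real^'m) set" where
  "down_closure S = {t. (\<forall>i. 0 \<le> t$i) \<and> (\<exists>s\<in>S. \<forall>i. t$i \<le> s$i)}"

definition rho_sets :: "(real^'m) set \<Rightarrow> (real^'m) set \<Rightarrow> ereal" where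
  "rho_sets S1 S2 = Sup (ereal ` {r. 0 \<le> r \<and> (\<lambda>x. r *\<^sub>R x) ` S1 \<subseteq> S2})"

definition gamma_sets :: "(real^'m) set \<Rightarrow> (real^'m) set \<Rightarrow> ereal" where
  "gamma_sets S1 S2 = Inf (ereal ` {g. 0 \<le> g \<and> S2 \<subseteq> (\<lambda>x. g *\<^sub>R x) ` S1})"

definition z_val :: "real^'n1 \<Rightarrow> real^'n2 \<Rightarrow> ('m \<Rightarrow> real^'n1) \<Rightarrow> ('m \<Rightarrow> real^'n2)
    \<Rightarrow> (real^'m) set \<Rightarrow> ereal" where
  "z_val c d a g S =
     (INF xy \<in> {(x, y). \<forall>u\<in>S. \<forall>i. a i \<bullet> x + g i \<bullet> y u \<ge> u$i}.
        ereal (c \<bullet> fst xy) + (SUP u\<in>S. ereal (d \<bullet> snd xy u)))"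

end

theory Submission imports Defs begin

lemma z_mono:
  assumes "S \<subseteq> T"
  shows "z_val c d a g S \<le> z_val c d a g T"
  unfolding z_val_def
proof (rule INF_mono)
  fix m assume m: "m \<in> {(x, y). \<forall>u\<in>T. \<forall>i. a i \<bullet> x + g i \<bullet> y u \<ge> u$i}"
  show "\<exists>n\<in>{(x, y). \<forall>u\<in>S. \<forall>i. a i \<bullet> x + g i \<bullet> y u \<ge> u$i}.
     ereal (c \<bullet> fst n) + (SUP u\<in>S. ereal (d \<bullet> snd n u)) \<le> ereal (c \<bullet> fst m) + (SUP u\<in>T. ereal (d \<bullet> snd m u))"
    using m assms by (intro bexI[of _ m]) (auto intro!: add_left_mono SUP_subset_mono)
qed

lemma z_down:
  "z_val c d a g (down_closure S) \<le> z_val c d a g S"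
  unfolding z_val_def
proof (rule INF_mono)
  fix m assume m: "m \<in> {(x, y). \<forall>u\<in>S. \<forall>i. a i \<bullet> x + g i \<bullet> y u \<ge> u$i}"
  obtain x y where xy: "m = (x, y)" by force
  define sel where "sel t = (SOME s. s\<in>S \<and> (\<forall>i. t$i \<le> s$i))" for t
  have sel: "sel t \<in> S \<and> (\<forall>i. t$i \<le> sel t$i)" if "t \<in> down_closure S" for t
  proof -
    have "\<exists>s. s\<in>S \<and> (\<forall>i. t$i \<le> s$i)" using that unfolding down_closure_def by auto
    from someI_ex[OF this] show ?thesis unfolding sel_def .
  qed
  let ?n = "(x, \<lambda>t. y (sel t))"
  have feas: "?n \<in> {(x, y). \<forall>u\<in>down_closure S. \<forall>i. a i \<bullet> x + g i \<bullet> y u \<ge> u$i}"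
  proof (clarsimp)
    fix u i assume u: "u \<in> down_closure S"
    have "u$i \<le> sel u $ i" using sel[OF u] by blast
    also have "\<dots> \<le> a i \<bullet> x + g i \<bullet> y (sel u)" using m xy sel[OF u] by auto
    finally show "u$i \<le> a i \<bullet> x + g i \<bullet> y (sel u)" .
  qed
  have "(SUP u\<in>down_closure S. ereal (d \<bullet> y (sel u))) \<le> (SUP u\<in>S. ereal (d \<bullet> y u))"
    by (rule SUP_least) (use sel in \<open>auto intro: SUP_upper\<close>)
  then show "\<exists>n\<in>{(x, y). \<forall>u\<in>down_closure S. \<forall>i. a i \<bullet> x + g i \<bullet> y u \<ge> u$i}.
     ereal (c \<bullet> fst n) + (SUP u\<in>down_closure S. ereal (d \<bullet> snd n u)) \<le> ereal (c \<bullet> fst m) + (SUP u\<in>S. ereal (d \<bullet> snd m u))"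
    using feas xy by (intro bexI[of _ ?n]) (auto intro!: add_left_mono)
qed

lemma z_empty: "z_val c d a g {} = -\<infinity>"
  unfolding z_val_def by (simp add: bot_ereal_def)

lemma z_scale_le:
  assumes r: "r > 0"
  shows "z_val c d a g ((\<lambda>x. r *\<^sub>R x) ` S) \<le> ereal r * z_val c d a g S"
proof (cases "S = {}")
  case True then show ?thesis by (simp add: z_empty)
next
  case False
  let ?F = "\<lambda>S. {(x, y). \<forall>u\<in>S. \<forall>i. a i \<bullet> x + g i \<bullet> y u \<ge> (u$i::real)}"
  let ?o = "\<lambda>S xy. ereal (c \<bullet> fst xy) + (SUP u\<in>S. ereal (d \<bullet> snd xy u))"
  have "z_val c d a g ((\<lambda>x. r *\<^sub>R x) ` S) \<le> (INF m\<in>?F S. ereal r * ?o S m)"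
    unfolding z_val_def
  proof (rule INF_mono)
    fix m assume m: "m \<in> ?F S"
    obtain x y where xy: "m = (x, y)" by force
    let ?n = "(r *\<^sub>R x, \<lambda>u. r *\<^sub>R y ((1/r) *\<^sub>R u))"
    have feas: "?n \<in> ?F ((\<lambda>x. r *\<^sub>R x) ` S)"
    proof (clarsimp)
      fix s i assume s: "s \<in> S"
      have "s$i \<le> a i \<bullet> x + g i \<bullet> y s" using m xy s by auto
      then have "r * s$i \<le> r * (a i \<bullet> x + g i \<bullet> y s)" using r by simp
      then show "r * s$i \<le> r * (a i \<bullet> x) + r * (g i \<bullet> y s)"
        using r by (simp add: algebra_simps)
    qed
    have "?o ((\<lambda>x. r *\<^sub>R x) ` S) ?n = ereal (r * (c \<bullet> x)) + (SUP s\<in>S. ereal r * ereal (d \<bullet> y s))"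
      using r by (simp add: image_comp o_def)
    also have "\<dots> = ereal r * ereal (c \<bullet> x) + ereal r * (SUP s\<in>S. ereal (d \<bullet> y s))"
      using r False by (simp add: Sup_ereal_mult_left')
    also have "\<dots> = ereal r * ?o S m"
      using xy by (simp add: ereal_distrib_left)
    finally show "\<exists>n\<in>?F ((\<lambda>x. r *\<^sub>R x) ` S). ?o ((\<lambda>x. r *\<^sub>R x) ` S) n \<le> ereal r * ?o S m"
      using feas by (intro bexI[of _ ?n]) auto
  qed
  also have "\<dots> = ereal r * z_val c d a g S"
  proof -
    have "(INF m\<in>?F S. ereal r * ?o S m) = Inf {ereal r * v |v. v \<in> ?o S ` ?F S}"
      by (rule arg_cong[where f=Inf]) auto
    also have "\<dots> = ereal r * Inf {v. v \<in> ?o S ` ?F S}"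
      by (rule ereal_Inf_cmult[OF r])
    finally show ?thesis unfolding z_val_def by simp
  qed
  finally show ?thesis .
qed

lemma z_scale_ge:
  assumes r: "r > 0"
  shows "ereal r * z_val c d a g S \<le> z_val c d a g ((\<lambda>x. r *\<^sub>R x) ` S)"
proof -
  have eq: "(\<lambda>x. (1/r) *\<^sub>R x) ` ((\<lambda>x. r *\<^sub>R x) ` S) = S"
    using r by (force simp: image_comp o_def)
  have "z_val c d a g S \<le> ereal (1/r) * z_val c d a g ((\<lambda>x. r *\<^sub>R x) ` S)"
    using z_scale_le[of "1/r" c d a g "(\<lambda>x. r *\<^sub>R x) ` S"] r eq by simp
  then have "ereal r * z_val c d a g S \<le> ereal r * (ereal (1/r) * z_val c d a g ((\<lambda>x. r *\<^sub>R x) ` S))"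
    using r by (intro ereal_mult_left_mono) auto
  also have "\<dots> = z_val c d a g ((\<lambda>x. r *\<^sub>R x) ` S)"
    using r by (simp add: mult.assoc[symmetric])
  finally show ?thesis .
qed

lemma z_zero:
  fixes c :: "real^'n1" and d :: "real^'n2" and T :: "(real^'m) set"
  assumes "T \<subseteq> {0}"
  shows "z_val c d a g T \<le> 0"
proof -
  have "z_val c d a g T \<le> z_val c d a g {0}" by (rule z_mono[OF assms])
  also have "z_val c d a g {0} \<le> ereal 0"
    unfolding z_val_def
    by (rule INF_lower2[of "(0::real^'n1, \<lambda>_. (0::real^'n2))"]) (auto simp: zero_ereal_def)
  finally show ?thesis by (simp add: zero_ereal_def)
qed

theorem theorem2:
  fixes Ui :: "'m::finite \<Rightarrow> real set"
    and U C :: "(real^'m) set"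
    and c :: "real^'n1::finite" and d :: "real^'n2::finite"
    and a :: "'m \<Rightarrow> real^'n1" and g :: "'m \<Rightarrow> real^'n2"
  assumes U_prod: "U = {u. \<forall>i. u$i \<in> Ui i}"
    and U_conv: "convex U"
    and U_nonneg: "\<forall>u\<in>U. \<forall>i. 0 \<le> u$i"
    and pos: "0 < z_val c d a g (U \<inter> C)"
    and le: "z_val c d a g (U \<inter> C) \<le> z_val c d a g U"
    and fin: "z_val c d a g U < \<infinity>"
  shows "rho_sets (down_closure U) (down_closure (U \<inter> C))
           \<le> z_val c d a g (U \<inter> C) / z_val c d a g U
       \<and> z_val c d a g (U \<inter> C) / z_val c d a g U
           \<le> gamma_sets (down_closure U) (down_closure (U \<inter> C))"
proof -
  let ?z = "z_val c d a g"
  obtain A where A: "?z (U \<inter> C) = ereal A" using pos le fin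
    by (cases "?z (U \<inter> C)") auto
  obtain B where B: "?z U = ereal B" using pos le fin
    by (cases "?z U") auto
  have A0: "0 < A" using pos A by simp
  have AB: "A \<le> B" using le A B by simp
  have B0: "0 < B" using A0 AB by simp
  have ratio: "?z (U \<inter> C) / ?z U = ereal (A / B)" using A B B0 by simp
  have subU: "U \<subseteq> down_closure U" using U_nonneg unfolding down_closure_def by auto
  have subUC: "U \<inter> C \<subseteq> down_closure (U \<inter> C)" using U_nonneg unfolding down_closure_def by auto
  have zU1: "?z U \<le> ?z (down_closure U)" by (rule z_mono[OF subU])
  have zU2: "?z (down_closure U) \<le> ?z U" by (rule z_down)
  have zC1: "?z (U \<inter> C) \<le> ?z (down_closure (U \<inter> C))" by (rule z_mono[OF subUC])
  have zC2: "?z (down_closure (U \<inter> C)) \<le> ?z (U \<inter> C)" by (rule z_down)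
  have rho: "rho_sets (down_closure U) (down_closure (U \<inter> C)) \<le> ereal (A / B)"
    unfolding rho_sets_def
  proof (rule Sup_least, clarify)
    fix r :: real
    assume r0: "0 \<le> r" and sub: "(\<lambda>x. r *\<^sub>R x) ` down_closure U \<subseteq> down_closure (U \<inter> C)"
    show "ereal r \<le> ereal (A / B)"
    proof (cases "r = 0")
      case True then show ?thesis using A0 B0 by simp
    next
      case False
      then have rp: "r > 0" using r0 by simp
      have "ereal r * ?z U \<le> ereal r * ?z (down_closure U)"
        using zU1 rp by (intro ereal_mult_left_mono) auto
      also have "\<dots> \<le> ?z ((\<lambda>x. r *\<^sub>R x) ` down_closure U)" by (rule z_scale_ge[OF rp])
      also have "\<dots> \<le> ?z (down_closure (U \<inter> C))" by (rule z_mono[OF sub])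
      also have "\<dots> \<le> ?z (U \<inter> C)" by (rule zC2)
      finally have "r * B \<le> A" using A B by simp
      then show ?thesis using B0 by (simp add: pos_le_divide_eq)
    qed
  qed
  have gam: "ereal (A / B) \<le> gamma_sets (down_closure U) (down_closure (U \<inter> C))"
    unfolding gamma_sets_def
  proof (rule Inf_greatest, clarify)
    fix r :: real
    assume r0: "0 \<le> r" and sub: "down_closure (U \<inter> C) \<subseteq> (\<lambda>x. r *\<^sub>R x) ` down_closure U"
    have c1: "?z (U \<inter> C) \<le> ?z ((\<lambda>x. r *\<^sub>R x) ` down_closure U)"
      using zC1 z_mono[OF sub] by (rule order_trans)
    show "ereal (A / B) \<le> ereal r"
    proof (cases "r = 0")
      case True
      have "(\<lambda>x. r *\<^sub>R x) ` down_closure U \<subseteq> {0}" using True by auto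
      then have "?z ((\<lambda>x. r *\<^sub>R x) ` down_closure U) \<le> 0" by (rule z_zero)
      then show ?thesis using c1 pos by simp
    next
      case False
      then have rp: "r > 0" using r0 by simp
      have "?z (U \<inter> C) \<le> ?z ((\<lambda>x. r *\<^sub>R x) ` down_closure U)" by (rule c1)
      also have "\<dots> \<le> ereal r * ?z (down_closure U)" by (rule z_scale_le[OF rp])
      also have "\<dots> \<le> ereal r * ?z U"
        using zU2 rp by (intro ereal_mult_left_mono) auto
      finally have "A \<le> r * B" using A B by simp
      then show ?thesis using B0 by (simp add: pos_divide_le_eq)
    qed
  qed
  show ?thesis using rho gam ratio by simp
qed

end
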